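(* Let $V$ be a vector space over $\mathbf k$ regarded as a graded space concentrated in degree $0$. Then Nijenhuis Lie algebra structures $(\mu,P)$ on $V$ are in bijection with Maurer–Cartan elements of the $L_\infty$-algebra $\mathfrak C_{\mathrm{NjL}}(V)$.
   Context: $\mathbf k$ is a field of characteristic $0$; graded spaces are homologically graded. $sV$ is the suspension, $(sV)_n=V_{n-1}$, $s$ of degree $1$. For homogeneous $x_1,\dots,x_n$ and $\sigma\in\mathbb S_n$, $\epsilon(\sigma;x_1,\dots,x_n)$ is defined by $x_1\odot\cdots\odot x_n=\epsilon(\sigma;x)\,x_{\sigma(1)}\odot\cdots\odot x_{\sigma(n)}$ in the graded symmetric algebra, and $\chi(\sigma;x)=\mathrm{sgn}(\sigma)\epsilon(\sigma;x)$. For $i_1+\dots+i_r=N$, $\mathrm{sh}(i_1,\dots,i_r)$ is the set of $\sigma\in\mathbb S_N$ increasing on each consecutive block of sizes $i_1,\dots,i_r$ and with $\sigma(1)<\sigma(i_1+1)<\dots<\sigma(i_1+\dots+i_{r-1}+1)$. Shuffle brace: for $F\in\mathrm{Hom}((sV)^{\otimes m},sV)$, $G_j\in\mathrm{Hom}((sV)^{\otimes k_j},sV)$, $1\le n\le m$, $F\{G_1,\dots,G_n\}:=\sum_{i_1+\dots+i_{n+1}+n=m,\,i_p\ge0}\sum_{\sigma\in\mathrm{sh}(1^{i_1},k_1,1^{i_2},\dots,k_n,1^{i_{n+1}})}(F\circ(\mathrm{id}^{\otimes i_1}\otimes G_1\otimes\mathrm{id}^{\otimes i_2}\otimes\cdots\otimes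 G_n\otimes\mathrm{id}^{\otimes i_{n+1}}))\sigma^{-1}$, where $1^i$ denotes $i$ entries $1$, tensor products of maps obey the Koszul sign rule, and $(H\sigma^{-1})(x_1\otimes\cdots\otimes x_N):=\epsilon(\sigma;x_1,\dots,x_N)H(x_{\sigma(1)}\otimes\cdots\otimes x_{\sigma(N)})$. Maps on $(sV)^{\odot m}$ are identified with $\mathbb S_m$-invariant maps on $(sV)^{\otimes m}$. $[F,H]_{\mathrm{RN}}:=F\{H\}-(-1)^{|F||H|}H\{F\}$. $\mathfrak C_{\mathrm{Lie}}(V)=\prod_{n\ge1}\mathrm{Hom}((sV)^{\odot n},sV)$, $\mathfrak C_{\mathrm{NjO}}(V)=\prod_{n\ge1}\mathrm{Hom}((sV)^{\odot n},V)$, $\mathfrak C_{\mathrm{NjL}}(V)=\mathfrak C_{\mathrm{Lie}}(V)\oplus\mathfrak C_{\mathrm{NjO}}(V)$, graded by degree of maps. For $g\in\mathfrak C_{\mathrm{NjO}}(V)$ put $sg=s\circ g$; elements of $\mathfrak C_{\mathrm{Lie}}(V)$ are written $sh$ with $h=s^{-1}\circ sh$, so $|sh|=|h|+1$. Operations: $l_1=0$; $l_2(sf\otimes sh)=[sf,sh]_{\mathrm{RN}}$; for $sh\in\mathrm{Hom}((sV)^{\odot n},sV)$, $n\ge1$, and $g_1,\dots,g_n\in\mathfrak C_{\mathrm{NjO}}(V)$: $l_{n+1}(sh\otimes g_1\otimes\cdots\otimes g_n)=\sum_{\sigma\in\mathbb S_n}\chi(\sigma;g_1,\dots,g_n)(-1)^{n(|h|+1)+\sum_{p=1}^{n-1}\sum_{j=1}^p|g_{\sigma(j)}|}\sum_{k=0}^n(-1)^{(|h|+1)\sum_{i=1}^k(|g_{\sigma(i)}|+1)+k}s^{-1}\circ\big(sg_{\sigma(1)}\{sg_{\sigma(2)}\{\cdots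 sg_{\sigma(k)}\{sh\{sg_{\sigma(k+1)},\dots,sg_{\sigma(n)}\}\}\cdots\}\}\big)$ (for $k=0$ the term is $s^{-1}\circ sh\{sg_{\sigma(1)},\dots,sg_{\sigma(n)}\}$); $l_{n+1}(g_1\otimes\cdots\otimes g_k\otimes sh\otimes g_{k+1}\otimes\cdots\otimes g_n):=(-1)^{(|h|+1)\sum_{j\le k}|g_j|+k}l_{n+1}(sh\otimes g_1\otimes\cdots\otimes g_n)$; all other components vanish. This is an $L_\infty$-algebra: a graded space with maps $l_n$ of degree $n-2$, graded antisymmetric with respect to $\chi$, satisfying $\sum_{i=1}^n\sum_{\sigma\in\mathrm{Sh}(i,n-i)}\chi(\sigma;x)(-1)^{i(n-i)}l_{n-i+1}(l_i(x_{\sigma(1)},\dots,x_{\sigma(i)}),x_{\sigma(i+1)},\dots,x_{\sigma(n)})=0$ (with $\mathrm{Sh}(i,n-i)$ the $(i,n-i)$-shuffles). A Maurer–Cartan element is $\alpha$ of degree $-1$ with $\sum_{n\ge1}(-1)^{n(n-1)/2}\frac1{n!}l_n(\alpha^{\otimes n})=0$. A Nijenhuis Lie algebra structure on $V$ is a Lie bracket $\mu$ and a linear $P$ with $\mu(Pa,Pb)=P(\mu(Pa,b)+\mu(a,Pb)-P\mu(a,b))$. *)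

theory Defs
  imports Complex_Main "HOL-Combinatorics.Permutations"
begin

text \<open>
  Setting: V is a vector space over a field k of characteristic 0, given by a
  type 'v with a scalar multiplication scale satisfying vector_space scale,
  concentrated in degree 0.  Hence sV is concentrated in degree 1.

  A map F in Hom((sV)^(tensor m), sV) (a component of
  C_Lie) is represented by its arity m together with the function
  Fv :: 'v list => 'v determined by F(s v1 ... s vm) = s (Fv [v1,...,vm]); its degree is 1 - m.
  A map g in Hom((sV)^(tensor m), V) (a component of C_NjO) is represented by
  its arity m and gv with g(s v1 ... s vm) = gv [v1,...,vm]; its degree is - m.
  Then s o g has the same representing function as g, and s^-1 o (sh) the same
  representing function as sh.  All inputs s v_i have degree 1, so Koszul signs
  of permutations of inputs are just signs of permutations.
\<close>

type_synonym 'v rep = "'v list \<Rightarrow> 'v"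
type_synonym ('k, 'v) scalemul = "'k \<Rightarrow> 'v \<Rightarrow> 'v"

definition pm :: "int \<Rightarrow> 'k::field" where
  "pm e = (if even e then 1 else -1)"

text \<open>Plug G_1..G_n into F after i_1, ..., i_n plain inputs (the i_(n+1) rest stay).\<close>
fun asm :: "nat list \<Rightarrow> (nat \<times> 'v rep) list \<Rightarrow> 'v list \<Rightarrow> 'v list" where
  "asm (i # is) ((k, G) # Gs) vs = take i vs @ G (take k (drop i vs)) # asm is Gs (drop (i + k) vs)"
| "asm _ _ vs = vs"

text \<open>Exponent of the Koszul sign of id^i1 (x) G1 (x) ... applied to degree-1 inputs:
  G_j (degree 1 - k_j) passes the p_j inputs before its block.\<close>
fun kexp :: "nat list \<Rightarrow> (nat \<times> 'v rep) list \<Rightarrow> nat \<Rightarrow> nat" where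
  "kexp (i # is) ((k, G) # Gs) p = (k - 1) * (p + i) + kexp is Gs (p + i + k)"
| "kexp _ _ _ = 0"

fun blocks :: "nat list \<Rightarrow> (nat \<times> 'v rep) list \<Rightarrow> nat list" where
  "blocks (i # is) ((k, G) # Gs) = replicate i 1 @ [k] @ blocks is Gs"
| "blocks is [] = concat (map (\<lambda>i. replicate i (1::nat)) is)"
| "blocks [] _ = []"

text \<open>sh(b_1,...,b_r) on {0..<N} (0-based): increasing on each block, and the
  first elements of the blocks increasing.\<close>
definition is_shuffle :: "nat list \<Rightarrow> (nat \<Rightarrow> nat) \<Rightarrow> bool" where
  "is_shuffle bs \<sigma> \<longleftrightarrow> \<sigma> permutes {..<sum_list bs} \<and>
     (\<forall>t<length bs. \<forall>a b. a < b \<and> b < bs ! t \<longrightarrow>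
        \<sigma> (sum_list (take t bs) + a) < \<sigma> (sum_list (take t bs) + b)) \<and>
     (\<forall>t. Suc t < length bs \<longrightarrow> \<sigma> (sum_list (take t bs)) < \<sigma> (sum_list (take (Suc t) bs)))"

text \<open>F{G_1,...,G_n} for F, G_j in C_Lie; (H sigma^-1)(x) = eps(sigma;x) H(x_sigma(1),...)
  with eps = sign sigma since all inputs have degree 1.\<close>
definition brace :: "('k::field, 'v::ab_group_add) scalemul \<Rightarrow> nat \<times> 'v rep \<Rightarrow>
    (nat \<times> 'v rep) list \<Rightarrow> nat \<times> 'v rep" where
  "brace scale F Gs = (let m = fst F; n = length Gs; N = m - n + sum_list (map fst Gs) in
     (N, \<lambda>vs. if n \<le> m \<and> length vs = N then
        (\<Sum>is \<in> {is. length is = Suc n \<and> sum_list is = m - n}.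
          \<Sum>\<sigma> \<in> {\<sigma>. is_shuffle (blocks is Gs) \<sigma>}.
            scale (of_int (sign \<sigma>) * pm (int (kexp is Gs 0)))
              (snd F (asm is Gs (map (\<lambda>t. vs ! \<sigma> t) [0..<N]))))
      else 0))"

text \<open>Richardson--Nijenhuis bracket [F,H] = F{H} - (-1)^(|F||H|) H{F}.\<close>
definition rn :: "('k::field, 'v::ab_group_add) scalemul \<Rightarrow> nat \<times> 'v rep \<Rightarrow> nat \<times> 'v rep \<Rightarrow> nat \<times> 'v rep" where
  "rn scale F H = (let a = brace scale F [H]; b = brace scale H [F] in
     (fst a, \<lambda>vs. snd a vs - scale (pm ((1 - int (fst F)) * (1 - int (fst H)))) (snd b vs)))"

definition eps :: "(nat \<Rightarrow> nat) \<Rightarrow> int list \<Rightarrow> 'k::field" where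
  "eps \<sigma> ds = pm (\<Sum>(s, t) \<in> {(s, t). s < t \<and> t < length ds \<and> \<sigma> t < \<sigma> s}. ds ! \<sigma> s * ds ! \<sigma> t)"

definition chi :: "(nat \<Rightarrow> nat) \<Rightarrow> int list \<Rightarrow> 'k::field" where
  "chi \<sigma> ds = of_int (sign \<sigma>) * eps \<sigma> ds"

text \<open>Homogeneous elements of C_NjL(V): Lie m f is sh in Hom((sV)^m, sV),
  NjO m g is g in Hom((sV)^m, V).\<close>
datatype 'v hel = Lie nat "'v rep" | NjO nat "'v rep"

fun isLie :: "'v hel \<Rightarrow> bool" where
  "isLie (Lie _ _) = True" | "isLie (NjO _ _) = False"

fun hpair :: "'v hel \<Rightarrow> nat \<times> 'v rep" where
  "hpair (Lie m f) = (m, f)" | "hpair (NjO m f) = (m, f)"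

fun hscale :: "('k, 'v) scalemul \<Rightarrow> 'k \<Rightarrow> 'v hel \<Rightarrow> 'v hel" where
  "hscale scale c (Lie m f) = Lie m (\<lambda>vs. scale c (f vs))"
| "hscale scale c (NjO m f) = NjO m (\<lambda>vs. scale c (f vs))"

definition hzero :: "'v::zero hel" where
  "hzero = NjO 0 (\<lambda>_. 0)"

text \<open>l_(n+1)(sh (x) g_1 (x) ... (x) g_n), nonzero only for sh of arity n >= 1.
  |h| = - arity, |g_i| = - arity(g_i).\<close>
definition lbase :: "('k::field, 'v::ab_group_add) scalemul \<Rightarrow> nat \<times> 'v rep \<Rightarrow>
    (nat \<times> 'v rep) list \<Rightarrow> 'v hel" where
  "lbase scale H gs = (let m = fst H; n = length gs; dh = - int m;
      ds = map (\<lambda>g. - int (fst g)) gs; Nout = m - n + sum_list (map fst gs) in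
    if m \<noteq> n \<or> n = 0 then NjO Nout (\<lambda>_. 0) else
    NjO Nout (\<lambda>vs. \<Sum>\<sigma> \<in> {\<sigma>. \<sigma> permutes {..<n}}.
      let gp = map (\<lambda>i. gs ! \<sigma> i) [0..<n];
          c = chi \<sigma> ds * pm (int n * (dh + 1) + (\<Sum>p \<in> {1..<n}. \<Sum>j<p. ds ! \<sigma> j))
      in \<Sum>k \<in> {0..n}. scale (c * pm ((dh + 1) * (\<Sum>i<k. ds ! \<sigma> i + 1) + int k))
            (snd (foldr (\<lambda>g T. brace scale g [T]) (take k gp) (brace scale H (drop k gp))) vs)))"

text \<open>l_n on a list of homogeneous elements.\<close>
definition lmap :: "('k::field, 'v::ab_group_add) scalemul \<Rightarrow> 'v hel list \<Rightarrow> 'v hel" where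
  "lmap scale xs = (let ps = filter (\<lambda>i. isLie (xs ! i)) [0..<length xs] in
     if length xs = 2 \<and> length ps = 2 then
       (case rn scale (hpair (xs ! 0)) (hpair (xs ! 1)) of (N, f) \<Rightarrow> Lie N f)
     else if length xs \<ge> 2 \<and> length ps = 1 then
       (let k = hd ps; H = hpair (xs ! k); gs = map hpair (take k xs @ drop (Suc k) xs) in
         hscale scale (pm ((1 - int (fst H)) * (\<Sum>j<k. - int (fst (gs ! j))) + int k))
           (lbase scale H gs))
     else hzero)"

fun hval :: "bool \<Rightarrow> nat \<Rightarrow> 'v list \<Rightarrow> 'v::zero hel \<Rightarrow> 'v" where
  "hval b m vs (Lie a f) = (if b \<and> a = m then f vs else 0)"
| "hval b m vs (NjO a f) = (if \<not> b \<and> a = m then f vs else 0)"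

text \<open>An element of C_NjL(V) = prod_n Hom((sV)^(odot n), sV) (+) prod_n Hom((sV)^(odot n), V):
  first component = C_Lie part by arity, second = C_NjO part by arity.\<close>
type_synonym 'v cnjl = "(nat \<Rightarrow> 'v rep) \<times> (nat \<Rightarrow> 'v rep)"

text \<open>Multilinear maps on (sV)^(tensor n) that are graded symmetric (inputs of degree 1).\<close>
definition gsym_multilinear :: "('k::field, 'v::ab_group_add) scalemul \<Rightarrow> nat \<Rightarrow> 'v rep \<Rightarrow> bool" where
  "gsym_multilinear scale n f \<longleftrightarrow>
     (\<forall>vs. length vs \<noteq> n \<longrightarrow> f vs = 0) \<and>
     (\<forall>vs i. length vs = n \<and> i < n \<longrightarrow> Vector_Spaces.linear scale scale (\<lambda>x. f (vs[i := x]))) \<and>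
     (\<forall>vs \<sigma>. length vs = n \<and> \<sigma> permutes {..<n} \<longrightarrow>
        f vs = scale (of_int (sign \<sigma>)) (f (permute_list \<sigma> vs)))"

definition cnjl_elem :: "('k::field, 'v::ab_group_add) scalemul \<Rightarrow> int \<Rightarrow> 'v cnjl \<Rightarrow> bool" where
  "cnjl_elem scale d x \<longleftrightarrow> fst x 0 = (\<lambda>_. 0) \<and> snd x 0 = (\<lambda>_. 0) \<and>
     (\<forall>n\<ge>1. gsym_multilinear scale n (fst x n) \<and> (1 - int n \<noteq> d \<longrightarrow> fst x n = (\<lambda>_. 0))) \<and>
     (\<forall>n\<ge>1. gsym_multilinear scale n (snd x n) \<and> (- int n \<noteq> d \<longrightarrow> snd x n = (\<lambda>_. 0)))"

definition hcomps :: "int \<Rightarrow> 'v cnjl \<Rightarrow> 'v hel list" where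
  "hcomps d x = (if 1 - d \<ge> 1 then [Lie (nat (1 - d)) (fst x (nat (1 - d)))] else []) @
                (if - d \<ge> 1 then [NjO (nat (- d)) (snd x (nat (- d)))] else [])"

text \<open>Partial sums sum_(n=1..M) (-1)^(n(n-1)/2) / n! l_n(alpha^(tensor n)), evaluated in the
  arity-m Lie (b) or NjO (not b) component at vs; l_n(alpha,...,alpha) is expanded
  multilinearly over the homogeneous components of alpha.\<close>
definition mc_partial :: "('k::field_char_0, 'v::ab_group_add) scalemul \<Rightarrow> 'v cnjl \<Rightarrow> nat \<Rightarrow>
    bool \<Rightarrow> nat \<Rightarrow> 'v list \<Rightarrow> 'v" where
  "mc_partial scale \<alpha> M b m vs = (\<Sum>n\<in>{1..M}. scale (pm (int (n * (n - 1) div 2)) / fact n)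
     (\<Sum>ws \<in> {ws. length ws = n \<and> set ws \<subseteq> set (hcomps (-1) \<alpha>)}. hval b m vs (lmap scale ws)))"

text \<open>Maurer--Cartan element: degree -1, and the (componentwise, discretely convergent)
  series sum_(n>=1) (-1)^(n(n-1)/2)/n! l_n(alpha^n) vanishes.\<close>
definition MC_element :: "('k::field_char_0, 'v::ab_group_add) scalemul \<Rightarrow> 'v cnjl \<Rightarrow> bool" where
  "MC_element scale \<alpha> \<longleftrightarrow> cnjl_elem scale (-1) \<alpha> \<and>
     (\<forall>b m vs. length vs = m \<longrightarrow> (\<exists>N. \<forall>M\<ge>N. mc_partial scale \<alpha> M b m vs = 0))"

definition lie_bracket :: "('k::field, 'v::ab_group_add) scalemul \<Rightarrow> ('v \<Rightarrow> 'v \<Rightarrow> 'v) \<Rightarrow> bool" where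
  "lie_bracket scale \<mu> \<longleftrightarrow>
     (\<forall>x. Vector_Spaces.linear scale scale (\<mu> x)) \<and>
     (\<forall>y. Vector_Spaces.linear scale scale (\<lambda>x. \<mu> x y)) \<and>
     (\<forall>x. \<mu> x x = 0) \<and>
     (\<forall>x y z. \<mu> x (\<mu> y z) + \<mu> y (\<mu> z x) + \<mu> z (\<mu> x y) = 0)"

definition nijenhuis_lie :: "('k::field, 'v::ab_group_add) scalemul \<Rightarrow> ('v \<Rightarrow> 'v \<Rightarrow> 'v) \<Rightarrow> ('v \<Rightarrow> 'v) \<Rightarrow> bool" where
  "nijenhuis_lie scale \<mu> P \<longleftrightarrow> lie_bracket scale \<mu> \<and> Vector_Spaces.linear scale scale P \<and>
     (\<forall>a b. \<mu> (P a) (P b) = P (\<mu> (P a) b + \<mu> a (P b) - P (\<mu> a b)))"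

text \<open>The degree -1 element (s mu, P) of C_NjL(V): s mu = s o mu o (s^-1 (x) s^-1), whose
  Koszul sign gives s mu(s a, s b) = - s mu(a,b); and P viewed in Hom(sV, V), P(s a) = P a.\<close>
definition NjL_to_cnjl :: "('v::ab_group_add \<Rightarrow> 'v \<Rightarrow> 'v) \<Rightarrow> ('v \<Rightarrow> 'v) \<Rightarrow> 'v cnjl" where
  "NjL_to_cnjl \<mu> P =
     ((\<lambda>n. if n = 2 then (\<lambda>vs. if length vs = 2 then - \<mu> (vs ! 0) (vs ! 1) else 0) else (\<lambda>_. 0)),
      (\<lambda>n. if n = 1 then (\<lambda>vs. if length vs = 1 then P (vs ! 0) else 0) else (\<lambda>_. 0)))"

end

theory Submission
  imports Defs
begin

lemma perm3: assumes "\<sigma> permutes {..<3::nat}"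
  shows "\<sigma> = (\<lambda>x. if x = 0 then \<sigma> 0 else if x = 1 then \<sigma> 1 else if x = 2 then \<sigma> 2 else x)"
    "\<sigma> 0 < 3" "\<sigma> 1 < 3" "\<sigma> 2 < 3" "\<sigma> 0 \<noteq> \<sigma> 1" "\<sigma> 0 \<noteq> \<sigma> 2" "\<sigma> 1 \<noteq> \<sigma> 2"
proof -
  show "\<sigma> = (\<lambda>x. if x = 0 then \<sigma> 0 else if x = 1 then \<sigma> 1 else if x = 2 then \<sigma> 2 else x)"
  proof
    fix x
    show "\<sigma> x = (if x = 0 then \<sigma> 0 else if x = 1 then \<sigma> 1 else if x = 2 then \<sigma> 2 else x)"
    proof (cases "x < 3")
      case True then have "x = 0 \<or> x = 1 \<or> x = 2" by arith
      then show ?thesis by auto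
    next
      case False then show ?thesis using permutes_not_in[OF assms, of x] by auto
    qed
  qed
  show "\<sigma> 0 < 3" "\<sigma> 1 < 3" "\<sigma> 2 < 3" using permutes_in_image[OF assms] by auto
  have i: "inj \<sigma>" using permutes_inj[OF assms] .
  show "\<sigma> 0 \<noteq> \<sigma> 1" "\<sigma> 0 \<noteq> \<sigma> 2" "\<sigma> 1 \<noteq> \<sigma> 2" by (simp_all add: inj_eq[OF i])
qed

lemma perm2: assumes "\<sigma> permutes {..<2::nat}"
  shows "\<sigma> = (\<lambda>x. if x = 0 then \<sigma> 0 else if x = 1 then \<sigma> 1 else x)"
    "\<sigma> 0 < 2" "\<sigma> 1 < 2" "\<sigma> 0 \<noteq> \<sigma> 1"
proof -
  show "\<sigma> = (\<lambda>x. if x = 0 then \<sigma> 0 else if x = 1 then \<sigma> 1 else x)"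
  proof
    fix x
    show "\<sigma> x = (if x = 0 then \<sigma> 0 else if x = 1 then \<sigma> 1 else x)"
    proof (cases "x < 2")
      case True then have "x = 0 \<or> x = 1" by arith
      then show ?thesis by auto
    next
      case False then show ?thesis using permutes_not_in[OF assms, of x] by auto
    qed
  qed
  show "\<sigma> 0 < 2" "\<sigma> 1 < 2" using permutes_in_image[OF assms] by auto
  have i: "inj \<sigma>" using permutes_inj[OF assms] .
  show "\<sigma> 0 \<noteq> \<sigma> 1" by (simp_all add: inj_eq[OF i])
qed

lemma sh21: "Collect (is_shuffle [Suc (Suc 0), Suc 0]) = {id, transpose (Suc 0) (Suc (Suc 0))}"
proof (intro set_eqI iffI)
  fix \<sigma> :: "nat \<Rightarrow> nat" assume "\<sigma> \<in> Collect (is_shuffle [Suc (Suc 0), Suc 0])"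
  then have p: "\<sigma> permutes {..<3}" and a: "\<sigma> 0 < \<sigma> 1" and b: "\<sigma> 0 < \<sigma> 2"
    unfolding is_shuffle_def by (auto simp: numeral_eq_Suc less_Suc_eq)
  note q = perm3[OF p]
  have "\<sigma> 0 = 0" using q a b by linarith
  then have "(\<sigma> 1 = 1 \<and> \<sigma> 2 = 2) \<or> (\<sigma> 1 = 2 \<and> \<sigma> 2 = 1)" using q a b by linarith
  then show "\<sigma> \<in> {id, transpose (Suc 0) (Suc (Suc 0))}"
    apply (subst q(1)) using \<open>\<sigma> 0 = 0\<close> by (auto simp: fun_eq_iff transpose_def)
next
  fix \<sigma> :: "nat \<Rightarrow> nat" assume "\<sigma> \<in> {id, transpose (Suc 0) (Suc (Suc 0))}"
  then show "\<sigma> \<in> Collect (is_shuffle [Suc (Suc 0), Suc 0])"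
    by (auto simp: is_shuffle_def permutes_swap_id numeral_eq_Suc less_Suc_eq transpose_def)
qed

lemma sh12: "Collect (is_shuffle [Suc 0, Suc (Suc 0)]) = {id}"
proof (intro set_eqI iffI)
  fix \<sigma> :: "nat \<Rightarrow> nat" assume "\<sigma> \<in> Collect (is_shuffle [Suc 0, Suc (Suc 0)])"
  then have p: "\<sigma> permutes {..<3}" and a: "\<sigma> 0 < \<sigma> 1" and b: "\<sigma> 1 < \<sigma> 2"
    unfolding is_shuffle_def by (auto simp: numeral_eq_Suc less_Suc_eq)
  note q = perm3[OF p]
  have "\<sigma> 0 = 0" "\<sigma> 1 = 1" "\<sigma> 2 = 2" using q a b by linarith+
  then show "\<sigma> \<in> {id}"
    apply (subst q(1)) by (auto simp: fun_eq_iff)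
next
  fix \<sigma> :: "nat \<Rightarrow> nat" assume "\<sigma> \<in> {id}"
  then show "\<sigma> \<in> Collect (is_shuffle [Suc 0, Suc (Suc 0)])"
    by (auto simp: is_shuffle_def numeral_eq_Suc less_Suc_eq)
qed

lemma sh11: "Collect (is_shuffle [Suc 0, Suc 0]) = {id}"
proof (intro set_eqI iffI)
  fix \<sigma> :: "nat \<Rightarrow> nat" assume "\<sigma> \<in> Collect (is_shuffle [Suc 0, Suc 0])"
  then have p: "\<sigma> permutes {..<2}" and a: "\<sigma> 0 < \<sigma> 1"
    unfolding is_shuffle_def by (auto simp: numeral_eq_Suc less_Suc_eq)
  note q = perm2[OF p]
  have "\<sigma> 0 = 0" "\<sigma> 1 = 1" using q a by linarith+
  then show "\<sigma> \<in> {id}"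
    apply (subst q(1)) by (auto simp: fun_eq_iff)
next
  fix \<sigma> :: "nat \<Rightarrow> nat" assume "\<sigma> \<in> {id}"
  then show "\<sigma> \<in> Collect (is_shuffle [Suc 0, Suc 0])"
    by (auto simp: is_shuffle_def numeral_eq_Suc less_Suc_eq)
qed

lemma sh2: "Collect (is_shuffle [Suc (Suc 0)]) = {id}"
proof (intro set_eqI iffI)
  fix \<sigma> :: "nat \<Rightarrow> nat" assume "\<sigma> \<in> Collect (is_shuffle [Suc (Suc 0)])"
  then have p: "\<sigma> permutes {..<2}" and a: "\<sigma> 0 < \<sigma> 1"
    unfolding is_shuffle_def by (auto simp: numeral_eq_Suc less_Suc_eq)
  note q = perm2[OF p]
  have "\<sigma> 0 = 0" "\<sigma> 1 = 1" using q a by linarith+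
  then show "\<sigma> \<in> {id}"
    apply (subst q(1)) by (auto simp: fun_eq_iff)
next
  fix \<sigma> :: "nat \<Rightarrow> nat" assume "\<sigma> \<in> {id}"
  then show "\<sigma> \<in> Collect (is_shuffle [Suc (Suc 0)])"
    by (auto simp: is_shuffle_def numeral_eq_Suc less_Suc_eq)
qed

lemma perms2: "{\<sigma>. \<sigma> permutes {..<Suc (Suc 0)}} = {id, transpose 0 (1::nat)}"
proof (intro set_eqI iffI)
  fix \<sigma> :: "nat \<Rightarrow> nat" assume "\<sigma> \<in> {\<sigma>. \<sigma> permutes {..<Suc (Suc 0)}}"
  then have p: "\<sigma> permutes {..<2}" by (simp add: numeral_2_eq_2)
  note q = perm2[OF p]
  have "(\<sigma> 0 = 0 \<and> \<sigma> 1 = 1) \<or> (\<sigma> 0 = 1 \<and> \<sigma> 1 = 0)" using q by linarith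
  then show "\<sigma> \<in> {id, transpose 0 1}"
    apply (subst q(1)) by (auto simp: fun_eq_iff transpose_def)
next
  fix \<sigma> :: "nat \<Rightarrow> nat" assume "\<sigma> \<in> {id, transpose (0::nat) 1}"
  then show "\<sigma> \<in> {\<sigma>. \<sigma> permutes {..<Suc (Suc 0)}}"
    by (auto simp: permutes_swap_id)
qed

lemma is21: "{is::nat list. length is = Suc (Suc 0) \<and> sum_list is = Suc 0} = {[0, Suc 0],[Suc 0, 0]}"
  by (auto simp: length_Suc_conv)
lemma is30: "{is::nat list. length is = Suc (Suc (Suc 0)) \<and> (\<forall>n\<in>set is. n = 0)} = {[0,0,0]}"
  by (auto simp: length_Suc_conv)
lemma is20: "{is::nat list. length is = Suc (Suc 0) \<and> (\<forall>n\<in>set is. n = 0)} = {[0,0]}"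
  by (auto simp: length_Suc_conv)
lemma is12: "{is::nat list. length is = Suc 0 \<and> sum_list is = Suc (Suc 0)} = {[Suc (Suc 0)]}"
  by (auto simp: length_Suc_conv)

lemma id_ne_tr: "id \<noteq> transpose (Suc 0) (Suc (Suc 0))" "id \<noteq> transpose (0::nat) 1"
  by (auto simp: fun_eq_iff transpose_def)

lemma sum_pair: "a \<noteq> b \<Longrightarrow> sum h {a,b} = h a + h b"
  by simp

lemma pm_simps[simp]: "pm 0 = 1" "pm 1 = -1"
  by (simp_all add: pm_def)

lemma brace22: assumes "vector_space scale" shows "brace scale (2,f) [(2,g)] = (3, \<lambda>vs. if length vs = 3 then f [g [vs!0, vs!1], vs!2] - f [g [vs!0, vs!2], vs!1] - f [vs!0, g [vs!1, vs!2]] else 0)"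
proof -
  interpret vector_space scale by fact
  show ?thesis
  apply (simp add: brace_def Let_def numeral_eq_Suc is21 sh21 sh12 fun_eq_iff sum_pair[OF id_ne_tr(1)] sign_swap_id scale_minus_left)
  done
qed
lemma brace211: assumes "vector_space scale" shows "brace scale (2,f) [(1,p),(1,q)] = (2, \<lambda>vs. if length vs = 2 then f [p [vs!0], q [vs!1]] else 0)"
proof -
  interpret vector_space scale by fact
  show ?thesis
  by (simp add: brace_def Let_def numeral_eq_Suc is30 sh11 fun_eq_iff)
qed

lemma brace21: assumes "vector_space scale" shows "brace scale (2,f) [(1,p)] = (2, \<lambda>vs. if length vs = 2 then f [p [vs!0], vs!1] + f [vs!0, p [vs!1]] else 0)"
proof -
  interpret vector_space scale by fact
  show ?thesis
  by (simp add: brace_def Let_def numeral_eq_Suc is21 sh11 fun_eq_iff)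
qed

lemma brace12: assumes "vector_space scale" shows "brace scale (1,p) [(2,g)] = (2, \<lambda>vs. if length vs = 2 then p [g [vs!0, vs!1]] else 0)"
proof -
  interpret vector_space scale by fact
  show ?thesis
  by (simp add: brace_def Let_def numeral_eq_Suc is20 sh2 fun_eq_iff)
qed

lemma brace2nil: assumes "vector_space scale" shows "brace scale (2,f) [] = (2, \<lambda>vs. if length vs = 2 then f [vs!0, vs!1] else 0)"
proof -
  interpret vector_space scale by fact
  show ?thesis
  by (simp add: brace_def Let_def numeral_eq_Suc is12 sh11 fun_eq_iff)
qed

lemma rn22: assumes "vector_space scale" shows "rn scale (2,f) (2,f) = (3, \<lambda>vs. if length vs = 3 then
   (f [f [vs!0, vs!1], vs!2] - f [f [vs!0, vs!2], vs!1] - f [vs!0, f [vs!1, vs!2]]) +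
   (f [f [vs!0, vs!1], vs!2] - f [f [vs!0, vs!2], vs!1] - f [vs!0, f [vs!1, vs!2]]) else 0)"
proof -
  interpret vector_space scale by fact
  show ?thesis
  by (simp add: rn_def brace22[OF assms] fun_eq_iff scale_minus_left)
qed

lemma eps_id: "eps id [-1,-1] = 1"
proof -
  have "{(s, t). s < t \<and> t < length [-1::int,-1] \<and> id t < (id s::nat)} = {}"
    by auto
  then show ?thesis by (simp only: eps_def) simp
qed
lemma eps_tr: "eps (transpose 0 1) [-1,-1] = -1"
proof -
  have "{(s, t). s < t \<and> t < length [-1::int,-1] \<and> transpose (0::nat) 1 t < transpose 0 1 s} = {(0,1)}"
    by (auto simp: transpose_def)
  then show ?thesis by (simp add: eps_def)
qed

lemma lbase2: assumes "vector_space scale" shows "lbase scale (2,f) [(1,p),(1,p)] = NjO 2 (\<lambda>vs. if length vs = 2 then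
   - ((f [p [vs!0], p [vs!1]] - p [f [p [vs!0], vs!1] + f [vs!0, p [vs!1]]] + p [p [f [vs!0, vs!1]]]) +
      (f [p [vs!0], p [vs!1]] - p [f [p [vs!0], vs!1] + f [vs!0, p [vs!1]]] + p [p [f [vs!0, vs!1]]])) else 0)"
proof -
  interpret vector_space scale by fact
  have s2: "{0..2::nat} = {0,1,2}" by auto
  show ?thesis
  apply (simp add: lbase_def Let_def perms2 sum_pair[OF id_ne_tr(2), unfolded One_nat_def] chi_def eps_id eps_tr[unfolded One_nat_def] s2 fun_eq_iff brace211[OF assms, unfolded One_nat_def] brace21[OF assms, unfolded One_nat_def] brace12[OF assms, unfolded One_nat_def] brace2nil[OF assms] sign_swap_id pm_def scale_minus_left)
  done
qed


lemma hcomps_m1: "hcomps (-1) x = [Lie 2 (fst x 2), NjO 1 (snd x 1)]"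
  by (simp add: hcomps_def)

lemma lbase_zero: "fst H \<noteq> length gs \<Longrightarrow> \<exists>N. lbase scale H gs = NjO N (\<lambda>_. 0)"
  by (simp add: lbase_def Let_def)

lemma lmap_big:
  assumes vs: "vector_space scale" and ws: "set ws \<subseteq> {Lie 2 f, NjO 1 P}" and l2: "length ws \<noteq> 2" and l3: "length ws \<noteq> 3"
  shows "hval b m vs (lmap scale ws) = 0"
proof -
  interpret vector_space scale by fact
  define ps where "ps = filter (\<lambda>i. isLie (ws ! i)) [0..<length ws]"
  show ?thesis
  proof (cases "length ws \<ge> 2 \<and> length ps = 1")
    case True
    then have "ps \<noteq> []" by auto
    then have "hd ps \<in> set ps" by simp
    then have k: "hd ps < length ws" "isLie (ws ! hd ps)" unfolding ps_def by auto
    then have "ws ! hd ps \<in> set ws" by simp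
    with ws have "ws ! hd ps \<in> {Lie 2 f, NjO 1 P}" by blast
    with k(2) have wk: "ws ! hd ps = Lie 2 f" by auto
    have "length (map hpair (take (hd ps) ws @ drop (Suc (hd ps)) ws)) = length ws - 1"
      using k by simp
    then have "fst (hpair (ws ! hd ps)) \<noteq> length (map hpair (take (hd ps) ws @ drop (Suc (hd ps)) ws))"
      using wk l3 by simp
    from lbase_zero[OF this, of scale] obtain N where
      "lbase scale (hpair (ws ! hd ps)) (map hpair (take (hd ps) ws @ drop (Suc (hd ps)) ws)) = NjO N (\<lambda>_. 0)" by blast
    then show ?thesis using True l2 unfolding lmap_def Let_def ps_def[symmetric] by simp
  next
    case False
    then show ?thesis using l2 unfolding lmap_def Let_def ps_def[symmetric] by (auto simp: hzero_def)
  qed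
qed

lemma lists_Suc: "{ws. length ws = Suc n \<and> set ws \<subseteq> A} = (\<lambda>(x,ws). x#ws) ` (A \<times> {ws. length ws = n \<and> set ws \<subseteq> A})"
proof (intro set_eqI iffI)
  fix ws assume "ws \<in> {ws. length ws = Suc n \<and> set ws \<subseteq> A}"
  then obtain x xs where "ws = x # xs" "x \<in> A" "length xs = n" "set xs \<subseteq> A"
    by (cases ws) auto
  then show "ws \<in> (\<lambda>(x,ws). x#ws) ` (A \<times> {ws. length ws = n \<and> set ws \<subseteq> A})"
    by (auto simp: image_iff)
qed auto

lemma sum_lists_Suc: "(\<Sum>ws\<in>{ws. length ws = Suc n \<and> set ws \<subseteq> A}. h ws) =
   (\<Sum>x\<in>A. \<Sum>ws\<in>{ws. length ws = n \<and> set ws \<subseteq> A}. h (x#ws))"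
proof -
  have inj: "inj_on (\<lambda>(x,ws). x#ws) (A \<times> {ws. length ws = n \<and> set ws \<subseteq> A})"
    by (auto simp: inj_on_def)
  show ?thesis
    unfolding lists_Suc sum.reindex[OF inj] sum.cartesian_product by (simp add: case_prod_beta)
qed

lemma lists_0: "{ws. length ws = 0 \<and> set ws \<subseteq> A} = {[]}"
  by auto

lemma sumW2: "a \<noteq> b \<Longrightarrow> (\<Sum>ws\<in>{ws. length ws = 2 \<and> set ws \<subseteq> {a,b}}. h ws) = h [a,a] + h [a,b] + h [b,a] + h [b,b]"
  by (simp only: numeral_2_eq_2 sum_lists_Suc lists_0) (simp add: add.assoc)

lemma sumW3: "a \<noteq> b \<Longrightarrow> (\<Sum>ws\<in>{ws. length ws = 3 \<and> set ws \<subseteq> {a,b}}. h ws) =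
   h [a,a,a] + h [a,a,b] + h [a,b,a] + h [a,b,b] + h [b,a,a] + h [b,a,b] + h [b,b,a] + h [b,b,b]"
  by (simp only: numeral_3_eq_3 sum_lists_Suc lists_0) (simp add: add.assoc)

lemma lmapLL: assumes "vector_space scale" shows
  "hval b m vs (lmap scale [Lie 2 f, Lie 2 f]) = (if b \<and> m = 3 then snd (rn scale (2,f) (2,f)) vs else 0)"
  by (simp add: lmap_def Let_def rn22[OF assms] upt_rec)
lemma lmap2_other: assumes "vector_space scale" shows
  "hval b m vs (lmap scale [Lie 2 f, NjO 1 P]) = 0"
  "hval b m vs (lmap scale [NjO 1 P, Lie 2 f]) = 0"
  "hval b m vs (lmap scale [NjO 1 P, NjO 1 P]) = 0"
proof -
  interpret vector_space scale by fact
  show "hval b m vs (lmap scale [Lie 2 f, NjO 1 P]) = 0"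
    "hval b m vs (lmap scale [NjO 1 P, Lie 2 f]) = 0"
    "hval b m vs (lmap scale [NjO 1 P, NjO 1 P]) = 0"
    by (simp_all add: lmap_def Let_def upt_rec lbase_def hzero_def)
qed

lemma lmap3: assumes "vector_space scale" shows
  "hval b m vs (lmap scale [Lie 2 f, NjO 1 P, NjO 1 P]) = (if \<not> b \<and> m = 2 then snd (hpair (lbase scale (2,f) [(1,P),(1,P)])) vs else 0)"
  "hval b m vs (lmap scale [NjO 1 P, Lie 2 f, NjO 1 P]) = (if \<not> b \<and> m = 2 then snd (hpair (lbase scale (2,f) [(1,P),(1,P)])) vs else 0)"
  "hval b m vs (lmap scale [NjO 1 P, NjO 1 P, Lie 2 f]) = (if \<not> b \<and> m = 2 then snd (hpair (lbase scale (2,f) [(1,P),(1,P)])) vs else 0)"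
  "hval b m vs (lmap scale [Lie 2 f, Lie 2 f, Lie 2 f]) = 0"
  "hval b m vs (lmap scale [Lie 2 f, Lie 2 f, NjO 1 P]) = 0"
  "hval b m vs (lmap scale [Lie 2 f, NjO 1 P, Lie 2 f]) = 0"
  "hval b m vs (lmap scale [NjO 1 P, Lie 2 f, Lie 2 f]) = 0"
  "hval b m vs (lmap scale [NjO 1 P, NjO 1 P, NjO 1 P]) = 0"
proof -
  interpret vector_space scale by fact
  show "hval b m vs (lmap scale [Lie 2 f, NjO 1 P, NjO 1 P]) = (if \<not> b \<and> m = 2 then snd (hpair (lbase scale (2,f) [(1,P),(1,P)])) vs else 0)"
  "hval b m vs (lmap scale [NjO 1 P, Lie 2 f, NjO 1 P]) = (if \<not> b \<and> m = 2 then snd (hpair (lbase scale (2,f) [(1,P),(1,P)])) vs else 0)"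
  "hval b m vs (lmap scale [NjO 1 P, NjO 1 P, Lie 2 f]) = (if \<not> b \<and> m = 2 then snd (hpair (lbase scale (2,f) [(1,P),(1,P)])) vs else 0)"
    by (simp_all add: lmap_def Let_def upt_rec lbase2[OF assms] lbase2[OF assms, unfolded One_nat_def] pm_def)
  show "hval b m vs (lmap scale [Lie 2 f, Lie 2 f, Lie 2 f]) = 0"
  "hval b m vs (lmap scale [Lie 2 f, Lie 2 f, NjO 1 P]) = 0"
  "hval b m vs (lmap scale [Lie 2 f, NjO 1 P, Lie 2 f]) = 0"
  "hval b m vs (lmap scale [NjO 1 P, Lie 2 f, Lie 2 f]) = 0"
  "hval b m vs (lmap scale [NjO 1 P, NjO 1 P, NjO 1 P]) = 0"
    by (simp_all add: lmap_def Let_def upt_rec hzero_def)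
qed
lemma scale_helpers: assumes "vector_space scale" shows
  "scale c (x + x) = scale (2 * c) x"
  "scale c (x + x + x) = scale (3 * c) x"
proof -
  interpret vector_space scale by fact
  have "scale c (x + x) = scale c x + scale c x" by (rule scale_right_distrib)
  also have "\<dots> = scale (c + c) x" by (rule scale_left_distrib[symmetric])
  also have "c + c = 2 * c" by simp
  finally show a: "scale c (x + x) = scale (2 * c) x" .
  have "scale c (x + x + x) = scale c (x + x) + scale c x" by (rule scale_right_distrib)
  also have "\<dots> = scale (2 * c) x + scale c x" by (simp only: a)
  also have "\<dots> = scale (2 * c + c) x" by (rule scale_left_distrib[symmetric])
  also have "2 * c + c = 3 * c" by simp
  finally show "scale c (x + x + x) = scale (3 * c) x" .
qed

lemma helper6:
  assumes "vector_space scale"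
  shows "scale (pm (int (3 * (3 - 1) div 2)) / fact 3 :: 'k::field_char_0) (-(w+w) + -(w+w) + -(w+w)) = w"
proof -
  interpret vector_space scale by fact
  have c: "pm (int (3 * (3 - 1) div 2)) / fact 3 = (-1/6 :: 'k)" by (simp add: pm_def fact_numeral)
  have "scale (-1/6::'k) (-(w+w) + -(w+w) + -(w+w)) = scale (3 * (-1/6)) (-(w+w))"
    by (rule scale_helpers(2)[OF assms])
  also have "\<dots> = - scale (-1/2) (w + w)"
  proof -
    have "(3 * (-1/6)::'k) = -1/2" by simp
    then show ?thesis by (simp only: scale_minus_right)
  qed
  also have "\<dots> = - scale (2 * (-1/2)) w" by (simp only: scale_helpers(1)[OF assms])
  also have "\<dots> = w" by (simp add: scale_minus_left)
  finally show ?thesis using c by simp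
qed

lemma helper2:
  assumes "vector_space scale"
  shows "scale (pm (int (2 * (2 - 1) div 2)) / fact 2 :: 'k::field_char_0) (j + j) = - j"
proof -
  interpret vector_space scale by fact
  have c: "pm (int (2 * (2 - 1) div 2)) / fact 2 = (-1/2 :: 'k)" by (simp add: pm_def)
  have "scale (-1/2::'k) (j + j) = scale (2 * (-1/2)) j"
    by (rule scale_helpers(1)[OF assms])
  also have "\<dots> = - j" by (simp add: scale_minus_left)
  finally show ?thesis using c by simp
qed

definition Jf :: "'v rep \<Rightarrow> 'v list \<Rightarrow> 'v::ab_group_add" where
  "Jf f vs = f [f [vs!0, vs!1], vs!2] - f [f [vs!0, vs!2], vs!1] - f [vs!0, f [vs!1, vs!2]]"
definition Wf :: "'v rep \<Rightarrow> 'v rep \<Rightarrow> 'v list \<Rightarrow> 'v::ab_group_add" where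
  "Wf f P vs = f [P [vs!0], P [vs!1]] - P [f [P [vs!0], vs!1] + f [vs!0, P [vs!1]]] + P [P [f [vs!0, vs!1]]]"

lemma mc_eval:
  fixes scale :: "'k::field_char_0 \<Rightarrow> 'v::ab_group_add \<Rightarrow> 'v"
  assumes vs: "vector_space scale" and M: "3 \<le> M"
  shows "mc_partial scale \<alpha> M b m vs =
    (if b \<and> m = 3 \<and> length vs = 3 then - Jf (fst \<alpha> 2) vs else 0) +
    (if \<not> b \<and> m = 2 \<and> length vs = 2 then Wf (fst \<alpha> 2) (snd \<alpha> 1) vs else 0)"
proof -
  interpret vector_space scale by fact
  define f where "f = fst \<alpha> 2"
  define P where "P = snd \<alpha> 1"
  have hc: "set (hcomps (-1) \<alpha>) = {Lie 2 f, NjO 1 P}" by (simp add: hcomps_m1 f_def P_def)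
  define t where "t n = scale (pm (int (n * (n - 1) div 2)) / fact n)
     (\<Sum>ws \<in> {ws. length ws = n \<and> set ws \<subseteq> {Lie 2 f, NjO 1 P}}. hval b m vs (lmap scale ws))" for n
  have mc: "mc_partial scale \<alpha> M b m vs = sum t {1..M}"
    unfolding mc_partial_def t_def hc ..
  have z: "t n = 0" if "n \<noteq> 2" "n \<noteq> 3" for n
  proof -
    have "(\<Sum>ws \<in> {ws. length ws = n \<and> set ws \<subseteq> {Lie 2 f, NjO 1 P}}. hval b m vs (lmap scale ws)) = 0"
    proof (rule sum.neutral, rule ballI)
      fix ws assume "ws \<in> {ws. length ws = n \<and> set ws \<subseteq> {Lie 2 f, NjO 1 P}}"
      then have w: "set ws \<subseteq> {Lie 2 f, NjO 1 P}" "length ws = n" by auto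
      show "hval b m vs (lmap scale ws) = 0"
        by (rule lmap_big[OF vs w(1)]) (use w(2) that in auto)
    qed
    then show ?thesis by (simp add: t_def)
  qed
  have "sum t {1..M} = sum t {2,3}"
    by (rule sum.mono_neutral_right) (use M z in auto)
  also have "\<dots> = t 2 + t 3" by simp
  finally have mc2: "mc_partial scale \<alpha> M b m vs = t 2 + t 3" using mc by simp
  have ne: "Lie 2 f \<noteq> NjO 1 P" by simp
  have t2: "t 2 = (if b \<and> m = 3 \<and> length vs = 3 then - Jf f vs else 0)"
  proof -
    have R: "snd (rn scale (2,f) (2,f)) vs = (if length vs = 3 then Jf f vs + Jf f vs else 0)"
      by (simp add: rn22[OF vs] Jf_def)
    show ?thesis
    proof (cases "b \<and> m = 3 \<and> length vs = 3")
      case True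
      then have c1: "(b \<and> m = 3) = True" "(length vs = 3) = True" by auto
      show ?thesis
        unfolding t_def sumW2[OF ne] lmapLL[OF vs] lmap2_other[OF vs] R c1 if_True add_0_left add_0_right
        apply (subst if_P)
        using True apply simp
        by (rule helper2[OF vs])
    next
      case False
      then have c0: "(b \<and> m = 3 \<and> length vs = 3) = False" by simp
      show ?thesis
      proof (cases "b \<and> m = 3")
        case True
        with False have c2: "(length vs = 3) = False" by simp
        show ?thesis unfolding t_def sumW2[OF ne] lmapLL[OF vs] lmap2_other[OF vs] R c2 c0 if_False if_True True
          by simp
      next
        case F: False
        then have c3: "(b \<and> m = 3) = False" by simp
        show ?thesis unfolding t_def sumW2[OF ne] lmapLL[OF vs] lmap2_other[OF vs] c3 c0 if_False
          by simp
      qed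
    qed
  qed
  have t3: "t 3 = (if \<not> b \<and> m = 2 \<and> length vs = 2 then Wf f P vs else 0)"
  proof -
    have L: "snd (hpair (lbase scale (2,f) [(1,P),(1,P)])) vs = (if length vs = 2 then -(Wf f P vs + Wf f P vs) else 0)"
      by (simp add: lbase2[OF vs] lbase2[OF vs, unfolded One_nat_def] Wf_def)
    show ?thesis
    proof (cases "\<not> b \<and> m = 2 \<and> length vs = 2")
      case True
      then have c1: "(\<not> b \<and> m = 2) = True" "(length vs = 2) = True" "(\<not> b \<and> m = 2 \<and> length vs = 2) = True" by auto
      show ?thesis
        unfolding t_def sumW3[OF ne] lmap3[OF vs] L c1 if_True add_0_left add_0_right
        apply (subst if_P)
        using True apply simp
        by (rule helper6[OF vs])
    next
      case False
      then have c0: "(\<not> b \<and> m = 2 \<and> length vs = 2) = False" by simp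
      show ?thesis
      proof (cases "\<not> b \<and> m = 2")
        case True
        with False have c2: "(length vs = 2) = False" by simp
        show ?thesis unfolding t_def sumW3[OF ne] lmap3[OF vs] L c2 c0 if_False if_True True
          by simp
      next
        case F: False
        then have c3: "(\<not> b \<and> m = 2) = False" by simp
        show ?thesis unfolding t_def sumW3[OF ne] lmap3[OF vs] c3 c0 if_False
          by (simp only: add_0_left add_0_right scale_zero_right)
      qed
    qed
  qed
  show ?thesis unfolding mc2 t2 t3 f_def P_def ..
qed
lemma MC_iff:
  fixes scale :: "'k::field_char_0 \<Rightarrow> 'v::ab_group_add \<Rightarrow> 'v"
  assumes vs: "vector_space scale"
  shows "MC_element scale \<alpha> \<longleftrightarrow> cnjl_elem scale (-1) \<alpha> \<and>
     (\<forall>ws. length ws = 3 \<longrightarrow> Jf (fst \<alpha> 2) ws = 0) \<and>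
     (\<forall>ws. length ws = 2 \<longrightarrow> Wf (fst \<alpha> 2) (snd \<alpha> 1) ws = 0)"
proof
  assume H: "MC_element scale \<alpha>"
  then have c: "cnjl_elem scale (-1) \<alpha>" by (simp add: MC_element_def)
  have E: "\<exists>N. \<forall>M\<ge>N. mc_partial scale \<alpha> M b m ws = 0" if "length ws = m" for b m ws
    using H that unfolding MC_element_def by blast
  have J: "Jf (fst \<alpha> 2) ws = 0" if l: "length ws = 3" for ws
  proof -
    obtain N where N: "\<forall>M\<ge>N. mc_partial scale \<alpha> M True 3 ws = 0" using E[OF l] by blast
    have "mc_partial scale \<alpha> (max N 3) True 3 ws = 0" using N by simp
    then show ?thesis using mc_eval[OF vs, of "max N 3" \<alpha> True 3 ws] l by simp
  qed
  have W: "Wf (fst \<alpha> 2) (snd \<alpha> 1) ws = 0" if l: "length ws = 2" for ws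
  proof -
    obtain N where N: "\<forall>M\<ge>N. mc_partial scale \<alpha> M False 2 ws = 0" using E[OF l] by blast
    have "mc_partial scale \<alpha> (max N 3) False 2 ws = 0" using N by simp
    then show ?thesis using mc_eval[OF vs, of "max N 3" \<alpha> False 2 ws] l by simp
  qed
  show "cnjl_elem scale (-1) \<alpha> \<and>
     (\<forall>ws. length ws = 3 \<longrightarrow> Jf (fst \<alpha> 2) ws = 0) \<and>
     (\<forall>ws. length ws = 2 \<longrightarrow> Wf (fst \<alpha> 2) (snd \<alpha> 1) ws = 0)"
    using c J W by blast
next
  assume H: "cnjl_elem scale (-1) \<alpha> \<and>
     (\<forall>ws. length ws = 3 \<longrightarrow> Jf (fst \<alpha> 2) ws = 0) \<and>
     (\<forall>ws. length ws = 2 \<longrightarrow> Wf (fst \<alpha> 2) (snd \<alpha> 1) ws = 0)"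
  have "mc_partial scale \<alpha> M b m ws = 0" if "M \<ge> 3" for M b m ws
    using mc_eval[OF vs that, of \<alpha> b m ws] H by simp
  then show "MC_element scale \<alpha>" using H unfolding MC_element_def by blast
qed

lemma linD: assumes "Vector_Spaces.linear s s g"
  shows "g (x + y) = g x + g y" "g (- x) = - g x" "g (x - y) = g x - g y" "g (s c x) = s c (g x)"
proof -
  have m: "module_hom s s g" using assms module_hom_iff_linear by blast
  show "g (x + y) = g x + g y" by (rule module_hom.add[OF m])
  show "g (- x) = - g x" by (rule module_hom.neg[OF m])
  show "g (x - y) = g x - g y" by (rule module_hom.diff[OF m])
  show "g (s c x) = s c (g x)" by (rule module_hom.scale[OF m])
qed

lemma linI: assumes "vector_space s" "\<And>x y. g (x + y) = g x + g y" "\<And>c x. g (s c x) = s c (g x)"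
  shows "Vector_Spaces.linear s s g"
  using assms by (simp add: Vector_Spaces.linear_iff)

lemma lin_neg: assumes "Vector_Spaces.linear s s g" shows "Vector_Spaces.linear s s (\<lambda>x. - g x)"
proof -
  have v: "vector_space s" using assms Vector_Spaces.linear_iff by blast
  interpret vector_space s by (rule v)
  show ?thesis by (rule linI[OF v]) (simp_all add: linD[OF assms] scale_minus_right)
qed

lemma core_J:
  assumes n1: "\<And>a b. \<mu> (- a) b = - \<mu> a b" and n2: "\<And>a b. \<mu> a (- b) = - \<mu> a b"
    and anti: "\<And>a b. \<mu> a b = - \<mu> b a"
  shows "Jf (\<lambda>vs. if length vs = 2 then - \<mu> (vs ! 0) (vs ! 1) else 0) [x, y, z] =
     - (\<mu> x (\<mu> y z) + \<mu> y (\<mu> z x) + \<mu> z (\<mu> x y))"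
proof -
  have a1: "\<mu> (\<mu> x y) z = - \<mu> z (\<mu> x y)" by (rule anti)
  have a2: "\<mu> (\<mu> x z) y = \<mu> y (\<mu> z x)"
    using anti[of "\<mu> x z" y] anti[of x z] n2[of y "\<mu> z x"] by simp
  show ?thesis by (simp add: Jf_def n1 n2 a1 a2 algebra_simps)
qed

lemma core_W:
  assumes n1: "\<And>a b. \<mu> (- a) b = - \<mu> a b" and n2: "\<And>a b. \<mu> a (- b) = - \<mu> a b"
    and P: "\<And>a b. P (a + b) = P a + P b" "\<And>a. P (- a) = - P a" "\<And>a b. P (a - b) = P a - P b"
  shows "Wf (\<lambda>vs. if length vs = 2 then - \<mu> (vs ! 0) (vs ! 1) else 0) (\<lambda>vs. if length vs = 1 then P (vs ! 0) else 0) [a, b] =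
     - (\<mu> (P a) (P b) - P (\<mu> (P a) b + \<mu> a (P b) - P (\<mu> a b)))"
proof -
  have "P (- \<mu> (P a) b + - \<mu> a (P b)) = - P (\<mu> (P a) b + \<mu> a (P b))"
    by (metis P(2) minus_add_distrib)
  then show ?thesis by (simp add: Wf_def n1 n2 P algebra_simps)
qed
lemma perm1: assumes "\<sigma> permutes {..<1::nat}" shows "\<sigma> = id"
proof
  fix x
  show "\<sigma> x = id x"
  proof (cases "x = 0")
    case True
    have "\<sigma> 0 \<in> {..<1}" using permutes_in_image[OF assms] by simp
    then show ?thesis using True by simp
  next
    case False
    then show ?thesis using permutes_not_in[OF assms, of x] by simp
  qed
qed

lemma gsym_zero: assumes "vector_space scale" shows "gsym_multilinear scale n (\<lambda>_. 0)"
proof -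
  interpret vector_space scale by fact
  have "Vector_Spaces.linear scale scale (\<lambda>x. 0)" by (rule linI[OF assms]) simp_all
  then show ?thesis by (simp add: gsym_multilinear_def)
qed

lemma gsym2:
  assumes vs: "vector_space scale"
    and l1: "\<And>y. Vector_Spaces.linear scale scale (\<lambda>x. \<mu> x y)"
    and l2: "\<And>x. Vector_Spaces.linear scale scale (\<mu> x)"
    and anti: "\<And>a b. \<mu> a b = - \<mu> b a"
  shows "gsym_multilinear scale 2 (\<lambda>vs. if length vs = 2 then - \<mu> (vs ! 0) (vs ! 1) else 0)"
proof -
  interpret vector_space scale by fact
  have A: "Vector_Spaces.linear scale scale (\<lambda>x. (if length (ws[i := x]) = 2 then - \<mu> (ws[i := x] ! 0) (ws[i := x] ! 1) else 0))"
    if "length ws = 2" "i < 2" for ws i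
  proof -
    have "i = 0 \<or> i = 1" using that by arith
    then show ?thesis
    proof
      assume i: "i = 0"
      have "(\<lambda>x. (if length (ws[i := x]) = 2 then - \<mu> (ws[i := x] ! 0) (ws[i := x] ! 1) else 0)) = (\<lambda>x. - \<mu> x (ws ! 1))"
        using that i by (simp add: fun_eq_iff)
      then show ?thesis using lin_neg[OF l1] by simp
    next
      assume i: "i = 1"
      have "(\<lambda>x. (if length (ws[i := x]) = 2 then - \<mu> (ws[i := x] ! 0) (ws[i := x] ! 1) else 0)) = (\<lambda>x. - \<mu> (ws ! 0) x)"
        using that i by (simp add: fun_eq_iff)
      then show ?thesis using lin_neg[OF l2] by simp
    qed
  qed
  have B: "(if length ws = 2 then - \<mu> (ws ! 0) (ws ! 1) else 0) =
      scale (of_int (sign \<sigma>)) (if length (permute_list \<sigma> ws) = 2 then - \<mu> (permute_list \<sigma> ws ! 0) (permute_list \<sigma> ws ! 1) else 0)"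
    if l: "length ws = 2" and p: "\<sigma> permutes {..<2}" for ws \<sigma>
  proof -
    have "\<sigma> \<in> {\<sigma>. \<sigma> permutes {..<Suc (Suc 0)}}" using p by (simp add: numeral_2_eq_2)
    then have s: "\<sigma> = id \<or> \<sigma> = transpose 0 1" unfolding perms2 by auto
    obtain a b where ab: "ws = [a, b]" using l by (auto simp: length_Suc_conv numeral_2_eq_2)
    from s show ?thesis
    proof
      assume "\<sigma> = id" then show ?thesis using ab by (simp add: permute_list_def)
    next
      assume "\<sigma> = transpose 0 1"
      then show ?thesis using ab anti[of b a] by (simp add: permute_list_def sign_swap_id scale_minus_left)
    qed
  qed
  show ?thesis unfolding gsym_multilinear_def using A B by auto
qed

lemma gsym1:
  assumes vs: "vector_space scale" and l: "Vector_Spaces.linear scale scale P"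
  shows "gsym_multilinear scale 1 (\<lambda>vs. if length vs = 1 then P (vs ! 0) else 0)"
proof -
  interpret vector_space scale by fact
  have A: "Vector_Spaces.linear scale scale (\<lambda>x. (if length (ws[i := x]) = 1 then P (ws[i := x] ! 0) else 0))"
    if "length ws = 1" "i < 1" for ws i
  proof -
    have "(\<lambda>x. (if length (ws[i := x]) = 1 then P (ws[i := x] ! 0) else 0)) = P"
      using that by (simp add: fun_eq_iff)
    then show ?thesis using l by simp
  qed
  have B: "(if length ws = 1 then P (ws ! 0) else 0) =
      scale (of_int (sign \<sigma>)) (if length (permute_list \<sigma> ws) = 1 then P (permute_list \<sigma> ws ! 0) else 0)"
    if "length ws = 1" "\<sigma> permutes {..<1}" for ws \<sigma>
    using perm1[OF that(2)] that(1) by (simp add: permute_list_def)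
  show ?thesis unfolding gsym_multilinear_def using A B by auto
qed

lemma cnjl_NjL:
  assumes vs: "vector_space scale"
    and l1: "\<And>y. Vector_Spaces.linear scale scale (\<lambda>x. \<mu> x y)"
    and l2: "\<And>x. Vector_Spaces.linear scale scale (\<mu> x)"
    and anti: "\<And>a b. \<mu> a b = - \<mu> b a"
    and lP: "Vector_Spaces.linear scale scale P"
  shows "cnjl_elem scale (-1) (NjL_to_cnjl \<mu> P)"
  unfolding cnjl_elem_def NjL_to_cnjl_def
  using gsym2[OF vs l1 l2 anti] gsym1[OF vs lP] gsym_zero[OF vs] by auto
lemma fwd:
  fixes scale :: "'k::field_char_0 \<Rightarrow> 'v::ab_group_add \<Rightarrow> 'v"
  assumes vs: "vector_space scale" and nj: "nijenhuis_lie scale \<mu> P"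
  shows "MC_element scale (NjL_to_cnjl \<mu> P)"
proof -
  interpret vector_space scale by fact
  have lb: "lie_bracket scale \<mu>" and lP: "Vector_Spaces.linear scale scale P"
    and nij: "\<And>a b. \<mu> (P a) (P b) = P (\<mu> (P a) b + \<mu> a (P b) - P (\<mu> a b))"
    using nj by (auto simp: nijenhuis_lie_def)
  have l1: "\<And>y. Vector_Spaces.linear scale scale (\<lambda>x. \<mu> x y)"
    and l2: "\<And>x. Vector_Spaces.linear scale scale (\<mu> x)"
    and alt: "\<And>x. \<mu> x x = 0"
    and jac: "\<And>x y z. \<mu> x (\<mu> y z) + \<mu> y (\<mu> z x) + \<mu> z (\<mu> x y) = 0"
    using lb by (auto simp: lie_bracket_def)
  have n1: "\<And>a b. \<mu> (- a) b = - \<mu> a b" using linD(2)[OF l1] .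
  have n2: "\<And>a b. \<mu> a (- b) = - \<mu> a b" using linD(2)[OF l2] .
  have anti: "\<mu> a b = - \<mu> b a" for a b
  proof -
    have "0 = \<mu> (a + b) (a + b)" using alt by simp
    also have "\<dots> = \<mu> a a + \<mu> a b + (\<mu> b a + \<mu> b b)"
      by (simp add: linD(1)[OF l1] linD(1)[OF l2])
    also have "\<dots> = \<mu> a b + \<mu> b a" using alt by simp
    finally show ?thesis by (simp add: eq_neg_iff_add_eq_0)
  qed
  have F: "fst (NjL_to_cnjl \<mu> P) 2 = (\<lambda>vs. if length vs = 2 then - \<mu> (vs ! 0) (vs ! 1) else 0)"
    and G: "snd (NjL_to_cnjl \<mu> P) 1 = (\<lambda>vs. if length vs = 1 then P (vs ! 0) else 0)"
    by (simp_all add: NjL_to_cnjl_def)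
  have J: "Jf (fst (NjL_to_cnjl \<mu> P) 2) ws = 0" if l: "length ws = 3" for ws
  proof -
    obtain x y z where "ws = [x, y, z]" using l by (auto simp: length_Suc_conv numeral_3_eq_3)
    then show ?thesis unfolding F using core_J[where \<mu>=\<mu>, OF n1 n2 anti] jac by simp
  qed
  have W: "Wf (fst (NjL_to_cnjl \<mu> P) 2) (snd (NjL_to_cnjl \<mu> P) 1) ws = 0" if l: "length ws = 2" for ws
  proof -
    obtain a b where "ws = [a, b]" using l by (auto simp: length_Suc_conv numeral_2_eq_2)
    then show ?thesis unfolding F G using core_W[where \<mu>=\<mu> and P=P, OF n1 n2 linD(1)[OF lP] linD(2)[OF lP] linD(3)[OF lP]] nij by simp
  qed
  show ?thesis using MC_iff[OF vs] cnjl_NjL[OF vs l1 l2 anti lP] J W by blast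
qed
lemma bwd:
  fixes scale :: "'k::field_char_0 \<Rightarrow> 'v::ab_group_add \<Rightarrow> 'v"
  assumes vs: "vector_space scale" and mc: "MC_element scale \<alpha>"
  shows "\<exists>\<mu> P. nijenhuis_lie scale \<mu> P \<and> \<alpha> = NjL_to_cnjl \<mu> P"
proof -
  interpret vector_space scale by fact
  have ce: "cnjl_elem scale (-1) \<alpha>"
    and JJ: "\<And>ws. length ws = 3 \<Longrightarrow> Jf (fst \<alpha> 2) ws = 0"
    and WW: "\<And>ws. length ws = 2 \<Longrightarrow> Wf (fst \<alpha> 2) (snd \<alpha> 1) ws = 0"
    using mc MC_iff[OF vs] by blast+
  define f where "f = fst \<alpha> 2"
  define g where "g = snd \<alpha> 1"
  define \<mu> where "\<mu> x y = - f [x, y]" for x y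
  define P where "P x = g [x]" for x
  have f0: "fst \<alpha> 0 = (\<lambda>_. 0)" "snd \<alpha> 0 = (\<lambda>_. 0)" using ce by (auto simp: cnjl_elem_def)
  have fn: "fst \<alpha> n = (\<lambda>_. 0)" if "n \<ge> 1" "n \<noteq> 2" for n using ce that by (auto simp: cnjl_elem_def)
  have gn: "snd \<alpha> n = (\<lambda>_. 0)" if "n \<ge> 1" "n \<noteq> 1" for n using ce that by (auto simp: cnjl_elem_def)
  have gf: "gsym_multilinear scale 2 f" unfolding f_def using ce by (auto simp: cnjl_elem_def)
  have gg: "gsym_multilinear scale 1 g" unfolding g_def using ce by (auto simp: cnjl_elem_def)
  have fz: "f ws = 0" if "length ws \<noteq> 2" for ws using gf that by (auto simp: gsym_multilinear_def)
  have gz: "g ws = 0" if "length ws \<noteq> 1" for ws using gg that by (auto simp: gsym_multilinear_def)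
  have flin: "Vector_Spaces.linear scale scale (\<lambda>x. f (ws[i := x]))" if "length ws = 2" "i < 2" for ws i
    using gf that by (auto simp: gsym_multilinear_def)
  have glin: "Vector_Spaces.linear scale scale (\<lambda>x. g (ws[i := x]))" if "length ws = 1" "i < 1" for ws i
    using gg that by (auto simp: gsym_multilinear_def)
  have fsym: "f ws = scale (of_int (sign \<sigma>)) (f (permute_list \<sigma> ws))" if "length ws = 2" "\<sigma> permutes {..<2}" for ws \<sigma>
    using gf that unfolding gsym_multilinear_def by blast
  have fanti: "f [a, b] = - f [b, a]" for a b
  proof -
    have p: "transpose 0 1 permutes {..<2::nat}" by (rule permutes_swap_id) auto
    have "f [a, b] = scale (of_int (sign (transpose (0::nat) 1))) (f (permute_list (transpose 0 1) [a, b]))"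
      by (rule fsym[OF _ p]) simp
    also have "\<dots> = - f [b, a]" by (simp add: sign_swap_id permute_list_def scale_minus_left)
    finally show ?thesis .
  qed
  have l1: "Vector_Spaces.linear scale scale (\<lambda>x. \<mu> x y)" for y
  proof -
    have "(\<lambda>x. f ([0, y][0 := x])) = (\<lambda>x. f [x, y])" by simp
    then have "Vector_Spaces.linear scale scale (\<lambda>x. f [x, y])" using flin[of "[0, y]" 0] by simp
    then show ?thesis unfolding \<mu>_def by (rule lin_neg)
  qed
  have l2: "Vector_Spaces.linear scale scale (\<mu> x)" for x
  proof -
    have "(\<lambda>y. f ([x, 0][1 := y])) = (\<lambda>y. f [x, y])" by simp
    then have "Vector_Spaces.linear scale scale (\<lambda>y. f [x, y])" using flin[of "[x, 0]" 1] by simp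
    then have "Vector_Spaces.linear scale scale (\<lambda>y. - f [x, y])" by (rule lin_neg)
    moreover have "\<mu> x = (\<lambda>y. - f [x, y])" by (simp add: \<mu>_def fun_eq_iff)
    ultimately show ?thesis by simp
  qed
  have lP: "Vector_Spaces.linear scale scale P"
  proof -
    have "(\<lambda>x. g ([0][0 := x])) = P" by (simp add: P_def fun_eq_iff)
    then show ?thesis using glin[of "[0]" 0] by simp
  qed
  have anti: "\<mu> a b = - \<mu> b a" for a b unfolding \<mu>_def using fanti[of a b] by simp
  have alt: "\<mu> x x = 0" for x
  proof -
    have "\<mu> x x + \<mu> x x = 0" using anti[of x x] by (simp add: eq_neg_iff_add_eq_0)
    then have "scale 1 (\<mu> x x + \<mu> x x) = 0" by simp
    then have "scale (2 * 1) (\<mu> x x) = 0" by (simp only: scale_helpers(1)[OF vs])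
    then show ?thesis by simp
  qed
  have n1: "\<And>a b. \<mu> (- a) b = - \<mu> a b" using linD(2)[OF l1] .
  have n2: "\<And>a b. \<mu> a (- b) = - \<mu> a b" using linD(2)[OF l2] .
  have eqF: "fst \<alpha> = fst (NjL_to_cnjl \<mu> P)"
  proof
    fix n
    show "fst \<alpha> n = fst (NjL_to_cnjl \<mu> P) n"
    proof (cases "n = 2")
      case True
      have "f ws = (if length ws = 2 then - \<mu> (ws ! 0) (ws ! 1) else 0)" for ws
      proof (cases "length ws = 2")
        case True
        then obtain a b where "ws = [a, b]" by (auto simp: length_Suc_conv numeral_2_eq_2)
        then show ?thesis by (simp add: \<mu>_def)
      next
        case False then show ?thesis using fz by simp
      qed
      then show ?thesis using True by (simp add: NjL_to_cnjl_def f_def fun_eq_iff)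
    next
      case False
      then show ?thesis using f0 fn[of n] by (cases "n = 0") (auto simp: NjL_to_cnjl_def)
    qed
  qed
  have eqG: "snd \<alpha> = snd (NjL_to_cnjl \<mu> P)"
  proof
    fix n
    show "snd \<alpha> n = snd (NjL_to_cnjl \<mu> P) n"
    proof (cases "n = 1")
      case True
      have "g ws = (if length ws = 1 then P (ws ! 0) else 0)" for ws
      proof (cases "length ws = 1")
        case True
        then obtain a where "ws = [a]" by (auto simp: length_Suc_conv)
        then show ?thesis by (simp add: P_def)
      next
        case False then show ?thesis using gz by simp
      qed
      then show ?thesis using True by (simp add: NjL_to_cnjl_def g_def fun_eq_iff)
    next
      case False
      then show ?thesis using f0 gn[of n] by (cases "n = 0") (auto simp: NjL_to_cnjl_def)
    qed
  qed
  have aeq: "\<alpha> = NjL_to_cnjl \<mu> P" using eqF eqG by (simp add: prod_eq_iff)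
  have F: "fst \<alpha> 2 = (\<lambda>vs. if length vs = 2 then - \<mu> (vs ! 0) (vs ! 1) else 0)"
    and G: "snd \<alpha> 1 = (\<lambda>vs. if length vs = 1 then P (vs ! 0) else 0)"
    by (subst aeq, simp add: NjL_to_cnjl_def)+
  have jac: "\<mu> x (\<mu> y z) + \<mu> y (\<mu> z x) + \<mu> z (\<mu> x y) = 0" for x y z
  proof -
    have "Jf (fst \<alpha> 2) [x, y, z] = 0" by (rule JJ) simp
    then show ?thesis unfolding F core_J[where \<mu>=\<mu>, OF n1 n2 anti] by (simp only: neg_equal_0_iff_equal)
  qed
  have nij: "\<mu> (P a) (P b) = P (\<mu> (P a) b + \<mu> a (P b) - P (\<mu> a b))" for a b
    using WW[of "[a, b]"] unfolding F G core_W[where \<mu>=\<mu> and P=P, OF n1 n2 linD(1)[OF lP] linD(2)[OF lP] linD(3)[OF lP]]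
    by simp
  have "nijenhuis_lie scale \<mu> P"
    unfolding nijenhuis_lie_def lie_bracket_def using l1 l2 alt jac lP nij by blast
  then show ?thesis using aeq by blast
qed

theorem proposition9p3:
  fixes scale :: "'k::field_char_0 \<Rightarrow> 'v::ab_group_add \<Rightarrow> 'v"
  assumes "vector_space scale"
  shows "bij_betw (\<lambda>(\<mu>, P). NjL_to_cnjl \<mu> P)
           {(\<mu>, P). nijenhuis_lie scale \<mu> P} {\<alpha>. MC_element scale \<alpha>}"
  unfolding bij_betw_def
proof (intro conjI)
  show "inj_on (\<lambda>(\<mu>, P). NjL_to_cnjl \<mu> P) {(\<mu>, P). nijenhuis_lie scale \<mu> P}"
  proof (rule inj_onI, clarify)
    fix \<mu> P \<mu>' P' :: "_"
    assume e: "NjL_to_cnjl \<mu> P = NjL_to_cnjl \<mu>' P'"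
    have "\<mu> x y = \<mu>' x y" for x y
      using arg_cong[OF e, of "\<lambda>\<alpha>. fst \<alpha> 2 [x, y]"] by (simp add: NjL_to_cnjl_def)
    moreover have "P x = P' x" for x
      using arg_cong[OF e, of "\<lambda>\<alpha>. snd \<alpha> 1 [x]"] by (simp add: NjL_to_cnjl_def)
    ultimately show "\<mu> = \<mu>' \<and> P = P'" by (auto simp: fun_eq_iff)
  qed
next
  show "(\<lambda>(\<mu>, P). NjL_to_cnjl \<mu> P) ` {(\<mu>, P). nijenhuis_lie scale \<mu> P} = {\<alpha>. MC_element scale \<alpha>}"
  proof (intro set_eqI iffI)
    fix \<alpha> assume "\<alpha> \<in> (\<lambda>(\<mu>, P). NjL_to_cnjl \<mu> P) ` {(\<mu>, P). nijenhuis_lie scale \<mu> P}"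
    then show "\<alpha> \<in> {\<alpha>. MC_element scale \<alpha>}" using fwd[OF assms] by auto
  next
    fix \<alpha> assume "\<alpha> \<in> {\<alpha>. MC_element scale \<alpha>}"
    then obtain \<mu> P where "nijenhuis_lie scale \<mu> P" "\<alpha> = NjL_to_cnjl \<mu> P"
      using bwd[OF assms] by blast
    then show "\<alpha> \<in> (\<lambda>(\<mu>, P). NjL_to_cnjl \<mu> P) ` {(\<mu>, P). nijenhuis_lie scale \<mu> P}"
      by (auto simp: image_iff)
  qed
qed

end
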